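(* For $p\in\mathbb{C}$, let $\Delta_p$ be the map on the oscillator algebra (generated by $H,E,F$ with $[H,E]=2E$, $[H,F]=-2F$, $[E,F]=1$) defined by $\Delta_p(H)=H\otimes \mathbb{I}+\mathbb{I}\otimes H$, $\Delta_p(E)=E\otimes \mathbb{I}+\mathbb{I}\otimes E$, $\Delta_p(F)=pF\otimes \mathbb{I}+(1-p)\mathbb{I}\otimes F$. In general $(\Delta_q\otimes \mathrm{Id})\circ\Delta_p \neq (\mathrm{Id}\otimes \Delta_{q'})\circ\Delta_{p'}$, but if the parameters satisfy $p'=pq$ and $1-p=(1-p')(1-q')$, then $(\Delta_q\otimes \mathrm{Id})\circ\Delta_p = (\mathrm{Id}\otimes \Delta_{q'})\circ\Delta_{p'}$.
   Context: The oscillator algebra is generated by $H,E,F$ with relations $[H,E]=2E$, $[H,F]=-2F$, $[E,F]=1$, acting on lowest-weight modules $V_\lambda$ with basis $|\lambda,n\rangle$ by $H|\lambda,n\rangle=(\lambda+2n)|\lambda,n\rangle$, $E|\lambda,n\rangle=|\lambda,n+1\rangle$, $F|\lambda,n\rangle=-n|\lambda,n-1\rangle$. The map $\Delta_p$ above arises as the coproduct for which the Clebsch--Gordan coefficients of $V_{\lambda_1}\otimes V_{\lambda_2}\sim\bigoplus_{k\ge0}V_{\lambda_1+\lambda_2+2k}$ are proportional to Krawtchouk polynomials $\binom{N}{n}\,{}_2F_1(-n,-k;-N;p^{-1})$. Here $\mathbb{I}$ is the identity and $\mathrm{Id}$ the identity map. *)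

theory Defs
  imports Complex_Main
begin

text \<open>Terms of the free (term) algebra over generators of type 'g, with complex scalars.
  Sc c stands for c times the unit.\<close>
datatype 'g alg = Gen 'g | Sc complex | Add "'g alg" "'g alg" | Mul "'g alg" "'g alg"

text \<open>Equality in the unital associative complex algebra presented by generators 'g and
  relations R: the least congruence containing R and the axioms of a unital associative
  C-algebra (scalar multiplication c*a is Mul (Sc c) a).\<close>
inductive alg_eq :: "('g alg \<times> 'g alg) set \<Rightarrow> 'g alg \<Rightarrow> 'g alg \<Rightarrow> bool" for R where
  rel: "(a, b) \<in> R \<Longrightarrow> alg_eq R a b"
| refl: "alg_eq R a a"
| sym: "alg_eq R a b \<Longrightarrow> alg_eq R b a"
| trans: "alg_eq R a b \<Longrightarrow> alg_eq R b c \<Longrightarrow> alg_eq R a c"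
| add_cong: "alg_eq R a a' \<Longrightarrow> alg_eq R b b' \<Longrightarrow> alg_eq R (Add a b) (Add a' b')"
| mul_cong: "alg_eq R a a' \<Longrightarrow> alg_eq R b b' \<Longrightarrow> alg_eq R (Mul a b) (Mul a' b')"
| add_assoc: "alg_eq R (Add (Add a b) c) (Add a (Add b c))"
| add_comm: "alg_eq R (Add a b) (Add b a)"
| add_zero: "alg_eq R (Add a (Sc 0)) a"
| add_neg: "alg_eq R (Add a (Mul (Sc (-1)) a)) (Sc 0)"
| mul_assoc: "alg_eq R (Mul (Mul a b) c) (Mul a (Mul b c))"
| mul_one_left: "alg_eq R (Mul (Sc 1) a) a"
| mul_one_right: "alg_eq R (Mul a (Sc 1)) a"
| distrib_left: "alg_eq R (Mul a (Add b c)) (Add (Mul a b) (Mul a c))"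
| distrib_right: "alg_eq R (Mul (Add a b) c) (Add (Mul a c) (Mul b c))"
| sc_add: "alg_eq R (Sc (x + y)) (Add (Sc x) (Sc y))"
| sc_mult: "alg_eq R (Sc (x * y)) (Mul (Sc x) (Sc y))"
| sc_central: "alg_eq R (Mul (Sc x) a) (Mul a (Sc x))"

definition comm :: "'g alg \<Rightarrow> 'g alg \<Rightarrow> 'g alg" where
  "comm a b = Add (Mul a b) (Mul (Sc (-1)) (Mul b a))"

primrec subst :: "('a \<Rightarrow> 'b alg) \<Rightarrow> 'a alg \<Rightarrow> 'b alg" where
  "subst f (Gen g) = f g"
| "subst f (Sc c) = Sc c"
| "subst f (Add a b) = Add (subst f a) (subst f b)"
| "subst f (Mul a b) = Mul (subst f a) (subst f b)"

datatype gen = H | E | F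

text \<open>n-fold tensor power of the oscillator algebra: generator (i, X) is
  I \<otimes> ... \<otimes> X (in slot i) \<otimes> ... \<otimes> I, for i < n.\<close>
definition tensor_rels :: "nat \<Rightarrow> ((nat \<times> gen) alg \<times> (nat \<times> gen) alg) set" where
  "tensor_rels n =
     {(comm (Gen (i, H)) (Gen (i, E)), Mul (Sc 2) (Gen (i, E))) | i. i < n}
   \<union> {(comm (Gen (i, H)) (Gen (i, F)), Mul (Sc (-2)) (Gen (i, F))) | i. i < n}
   \<union> {(comm (Gen (i, E)) (Gen (i, F)), Sc 1) | i. i < n}
   \<union> {(comm (Gen (i, X)) (Gen (j, Y)), Sc 0) | i j X Y. i < n \<and> j < n \<and> i \<noteq> j}"

fun Delta :: "complex \<Rightarrow> gen \<Rightarrow> (nat \<times> gen) alg" where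
  "Delta p H = Add (Gen (0, H)) (Gen (1, H))"
| "Delta p E = Add (Gen (0, E)) (Gen (1, E))"
| "Delta p F = Add (Mul (Sc p) (Gen (0, F))) (Mul (Sc (1 - p)) (Gen (1, F)))"

definition shift :: "nat \<times> gen \<Rightarrow> (nat \<times> gen) alg" where
  "shift ix = Gen (fst ix + 1, snd ix)"

text \<open>Delta_q \<otimes> Id : U\<otimes>U \<rightarrow> U\<otimes>U\<otimes>U on generators.\<close>
definition Delta_Id :: "complex \<Rightarrow> nat \<times> gen \<Rightarrow> (nat \<times> gen) alg" where
  "Delta_Id q ix = (if fst ix = 0 then Delta q (snd ix) else Gen (fst ix + 1, snd ix))"

text \<open>Id \<otimes> Delta_q : U\<otimes>U \<rightarrow> U\<otimes>U\<otimes>U on generators.\<close>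
definition Id_Delta :: "complex \<Rightarrow> nat \<times> gen \<Rightarrow> (nat \<times> gen) alg" where
  "Id_Delta q ix = (if fst ix = 0 then Gen ix
                    else if fst ix = 1 then subst shift (Delta q (snd ix))
                    else Gen (fst ix + 1, snd ix))"

text \<open>The two composites U \<rightarrow> U\<otimes>U\<otimes>U, applied to a (representative) element w of U.\<close>
definition lhs_map :: "complex \<Rightarrow> complex \<Rightarrow> gen alg \<Rightarrow> (nat \<times> gen) alg" where
  "lhs_map p q w = subst (Delta_Id q) (subst (Delta p) w)"

definition rhs_map :: "complex \<Rightarrow> complex \<Rightarrow> gen alg \<Rightarrow> (nat \<times> gen) alg" where
  "rhs_map p' q' w = subst (Id_Delta q') (subst (Delta p') w)"

end

theory Submission
  imports Defs
begin

type_synonym vec = "(nat \<Rightarrow> nat) \<Rightarrow> complex"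

definition opE :: "nat \<Rightarrow> vec \<Rightarrow> vec" where
  "opE i f = (\<lambda>m. if m i = 0 then 0 else f (m(i := m i - 1)))"
definition opF :: "nat \<Rightarrow> vec \<Rightarrow> vec" where
  "opF i f = (\<lambda>m. - of_nat (m i + 1) * f (m(i := Suc (m i))))"
definition opH :: "nat \<Rightarrow> vec \<Rightarrow> vec" where
  "opH i f = (\<lambda>m. 2 * of_nat (m i) * f m)"

fun gop :: "nat \<times> gen \<Rightarrow> vec \<Rightarrow> vec" where
  "gop (i, H) = opH i"
| "gop (i, E) = opE i"
| "gop (i, F) = opF i"

primrec ev :: "(nat \<times> gen) alg \<Rightarrow> vec \<Rightarrow> vec" where
  "ev (Gen g) = gop g"
| "ev (Sc c) = (\<lambda>f m. c * f m)"
| "ev (Add a b) = (\<lambda>f m. ev a f m + ev b f m)"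
| "ev (Mul a b) = (\<lambda>f. ev a (ev b f))"

lemma gop_lin: "gop g (\<lambda>m. f m + h m) = (\<lambda>m. gop g f m + gop g h m)"
  "gop g (\<lambda>m. c * f m) = (\<lambda>m. c * gop g f m)"
  by (cases g; cases "snd g"; auto simp: opE_def opF_def opH_def algebra_simps)+

lemma ev_lin1: "ev a (\<lambda>m. f m + h m) = (\<lambda>m. ev a f m + ev a h m)"
  by (induction a arbitrary: f h) (auto simp: algebra_simps gop_lin)

lemma ev_lin2: "ev a (\<lambda>m. c * f m) = (\<lambda>m. c * ev a f m)"
  by (induction a arbitrary: f) (auto simp: algebra_simps gop_lin)

lemmas ev_lin = ev_lin1 ev_lin2

lemma rels_ok: "(a, b) \<in> tensor_rels n \<Longrightarrow> ev a = ev b"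
  unfolding tensor_rels_def
  apply (elim UnE CollectE exE conjE)
  apply (auto simp: comm_def opE_def opF_def opH_def fun_eq_iff algebra_simps fun_upd_twist)
  subgoal for i j X Y f m by (cases X; cases Y; auto simp: opE_def opF_def opH_def algebra_simps fun_upd_twist)
  done

lemma sound: "alg_eq (tensor_rels n) a b \<Longrightarrow> ev a = ev b"
proof (induction rule: alg_eq.induct)
  case (rel a b) then show ?case by (rule rels_ok)
next
  case (distrib_left a b c) then show ?case by (simp add: ev_lin)
next
  case (sc_central x a) then show ?case by (simp add: ev_lin)
next
  case (mul_cong a a' b b') then show ?case by simp
qed (auto simp: fun_eq_iff algebra_simps)

lemma part1: "\<not> alg_eq (tensor_rels 3) (lhs_map 1 0 (Gen F)) (rhs_map 0 0 (Gen F))"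
proof
  assume "alg_eq (tensor_rels 3) (lhs_map 1 0 (Gen F)) (rhs_map 0 0 (Gen F))"
  then have "ev (lhs_map 1 0 (Gen F)) = ev (rhs_map 0 0 (Gen F))" by (rule sound)
  then have "ev (lhs_map 1 0 (Gen F)) (\<lambda>m. if m = (\<lambda>_. 0)(1 := 1) then 1 else 0) (\<lambda>_. 0)
     = ev (rhs_map 0 0 (Gen F)) (\<lambda>m. if m = (\<lambda>_. 0)(1 := 1) then 1 else 0) (\<lambda>_. 0)" by simp
  moreover have "((\<lambda>_. 0)(2 := 1) :: nat \<Rightarrow> nat) \<noteq> (\<lambda>_. 0)(1 := 1)"
  proof
    assume "((\<lambda>_. 0)(2 := 1) :: nat \<Rightarrow> nat) = (\<lambda>_. 0)(1 := 1)"
    then have "((\<lambda>_. 0)(2 := 1) :: nat \<Rightarrow> nat) 1 = ((\<lambda>_. 0)(1 := 1)) 1" by simp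
    then show False by simp
  qed
  ultimately show False
    by (simp add: lhs_map_def rhs_map_def Delta_Id_def Id_Delta_def shift_def opF_def numeral_2_eq_2)
qed

lemma sc_comb: "alg_eq R (Mul (Sc a) (Add (Mul (Sc b) x) (Mul (Sc c) y)))
   (Add (Mul (Sc (a*b)) x) (Mul (Sc (a*c)) y))"
proof -
  have s: "alg_eq R (Mul (Sc a) (Mul (Sc b) z)) (Mul (Sc (a*b)) z)" for b z
    by (meson alg_eq.mul_assoc alg_eq.sym alg_eq.trans alg_eq.mul_cong alg_eq.refl alg_eq.sc_mult)
  show ?thesis
    by (meson alg_eq.distrib_left alg_eq.trans alg_eq.add_cong s)
qed

lemma part2:
  assumes "p' = p * q" "1 - p = (1 - p') * (1 - q')"
  shows "alg_eq (tensor_rels 3) (lhs_map p q w) (rhs_map p' q' w)"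
proof (induction w)
  case (Gen g)
  show ?case
  proof (cases g)
    case H then show ?thesis
      by (simp add: lhs_map_def rhs_map_def Delta_Id_def Id_Delta_def shift_def alg_eq.add_assoc)
  next
    case E then show ?thesis
      by (simp add: lhs_map_def rhs_map_def Delta_Id_def Id_Delta_def shift_def alg_eq.add_assoc)
  next
    case F
    let ?G = "\<lambda>i. Gen (i::nat, F)"
    have e1: "p * (1 - q) = (1 - p') * q'" using assms by (simp add: algebra_simps)
    have l: "alg_eq (tensor_rels 3)
      (Add (Mul (Sc p) (Add (Mul (Sc q) (?G 0)) (Mul (Sc (1-q)) (?G 1)))) (Mul (Sc (1-p)) (?G 2)))
      (Add (Mul (Sc p') (?G 0)) (Add (Mul (Sc ((1-p')*q')) (?G 1)) (Mul (Sc ((1-p')*(1-q'))) (?G 2))))"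
    proof -
      have a: "alg_eq (tensor_rels 3)
      (Add (Mul (Sc p) (Add (Mul (Sc q) (?G 0)) (Mul (Sc (1-q)) (?G 1)))) (Mul (Sc (1-p)) (?G 2)))
      (Add (Mul (Sc (p*q)) (?G 0)) (Add (Mul (Sc (p*(1-q))) (?G 1)) (Mul (Sc (1-p)) (?G 2))))"
        by (rule alg_eq.trans[OF alg_eq.add_cong[OF sc_comb alg_eq.refl] alg_eq.add_assoc])
      show ?thesis using a unfolding e1 assms(2) by (simp add: assms(1))
    qed
    have r: "alg_eq (tensor_rels 3)
      (Add (Mul (Sc p') (?G 0)) (Mul (Sc (1-p')) (Add (Mul (Sc q') (?G 1)) (Mul (Sc (1-q')) (?G 2)))))
      (Add (Mul (Sc p') (?G 0)) (Add (Mul (Sc ((1-p')*q')) (?G 1)) (Mul (Sc ((1-p')*(1-q'))) (?G 2))))"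
      by (rule alg_eq.add_cong[OF alg_eq.refl sc_comb])
    show ?thesis using F alg_eq.trans[OF l alg_eq.sym[OF r]]
      by (simp add: lhs_map_def rhs_map_def Delta_Id_def Id_Delta_def shift_def numeral_2_eq_2)
  qed
next
  case (Sc x) then show ?case by (simp add: lhs_map_def rhs_map_def alg_eq.refl)
next
  case (Add w1 w2) then show ?case by (simp add: lhs_map_def rhs_map_def alg_eq.add_cong)
next
  case (Mul w1 w2) then show ?case by (simp add: lhs_map_def rhs_map_def alg_eq.mul_cong)
qed

theorem mainTheorem5:
  shows "(\<exists>p q p' q' :: complex. \<exists>w.
            \<not> alg_eq (tensor_rels 3) (lhs_map p q w) (rhs_map p' q' w))
       \<and> (\<forall>p q p' q' :: complex. p' = p * q \<and> 1 - p = (1 - p') * (1 - q') \<longrightarrow>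
            (\<forall>w. alg_eq (tensor_rels 3) (lhs_map p q w) (rhs_map p' q' w)))"
  using part1 part2 by blast

end
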